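(* Repeatedly choose independent uniformly random breaking points in $[0,1]$ (each new point further subdivides the current partition of $[0,1]$ into segments). Let $E$ be the event that after the first two breaks some three segments form a triangle (i.e. the three segments then present form a triangle), and after the third break no three of the four segments form a triangle. Then $\mathbb P[E] = \frac{3}{112}$.
   Context: Three lengths form a triangle iff each is less than the sum of the other two. *)

theory Defs
  imports "HOL-Probability.Probability"
begin

definition forms_triangle :: "real \<Rightarrow> real \<Rightarrow> real \<Rightarrow> bool" where
  "forms_triangle a b c \<longleftrightarrow> a < b + c \<and> b < a + c \<and> c < a + b"

definition seg_lengths :: "real list \<Rightarrow> real list" where
  "seg_lengths ps = (let s = sort (0 # ps @ [1]) in
      map (\<lambda>i. s ! (i + 1) - s ! i) [0..<length ps + 1])"

definition some_triangle :: "real list \<Rightarrow> bool" where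
  "some_triangle L \<longleftrightarrow> (\<exists>i j k. i < length L \<and> j < length L \<and> k < length L \<and>
      distinct [i, j, k] \<and> forms_triangle (L ! i) (L ! j) (L ! k))"

definition break_space :: "(nat \<Rightarrow> real) measure" where
  "break_space = PiM {..<3} (\<lambda>_. uniform_measure lborel {0..1})"

end

theory Submission
  imports Defs
begin


definition tri4 :: "real \<Rightarrow> real \<Rightarrow> real \<Rightarrow> real \<Rightarrow> bool" where
  "tri4 w x y z \<longleftrightarrow> forms_triangle w x y \<or> forms_triangle w x z \<or> forms_triangle w y z \<or> forms_triangle x y z"

lemma ft_sym1: "forms_triangle a b c = forms_triangle b a c"
  unfolding forms_triangle_def by linarith
lemma ft_sym2: "forms_triangle a b c = forms_triangle a c b"
  unfolding forms_triangle_def by linarith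

lemma st_sorted: "some_triangle L \<longleftrightarrow> (\<exists>k<length L. \<exists>j<k. \<exists>i<j. forms_triangle (L!i) (L!j) (L!k))"
proof
  assume "some_triangle L"
  then obtain i j k where h: "i < length L" "j < length L" "k < length L" "distinct [i,j,k]"
    "forms_triangle (L!i) (L!j) (L!k)" unfolding some_triangle_def by blast
  show "\<exists>k<length L. \<exists>j<k. \<exists>i<j. forms_triangle (L!i) (L!j) (L!k)"
  proof (cases "i < j")
    case True
    then show ?thesis
    proof (cases "j < k")
      case True with \<open>i<j\<close> h show ?thesis by blast
    next
      case False
      then show ?thesis
        by (metis h distinct_length_2_or_more linorder_neqE_nat ft_sym1 ft_sym2 \<open>i<j\<close>)
    qed
  next
    case False
    then show ?thesis
        by (metis h distinct_length_2_or_more linorder_neqE_nat ft_sym1 ft_sym2 distinct.simps(2) list.set_intros)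
  qed
next
  assume "\<exists>k<length L. \<exists>j<k. \<exists>i<j. forms_triangle (L!i) (L!j) (L!k)"
  then obtain i j k where "k < length L" "j < k" "i < j" "forms_triangle (L!i) (L!j) (L!k)" by blast
  then show "some_triangle L" unfolding some_triangle_def
    by (intro exI[of _ i] exI[of _ j] exI[of _ k]) auto
qed

lemma ex_Suc: "(\<exists>j<Suc n. P j) \<longleftrightarrow> P n \<or> (\<exists>j<n. P j)"
  by (auto simp: less_Suc_eq)

lemma some_triangle3: "some_triangle [a,b,c] \<longleftrightarrow> forms_triangle a b c"
  unfolding st_sorted by (simp add: numeral_eq_Suc ex_Suc)

lemma some_triangle4: "some_triangle [w,x,y,z] \<longleftrightarrow> tri4 w x y z"
  unfolding st_sorted tri4_def by (simp add: numeral_eq_Suc ex_Suc) blast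



lemma insort_nth:
  fixes xs :: "real list"
  assumes "sorted xs" "k \<le> length xs"
  shows "insort a xs ! k = (if k = 0 then (if xs = [] then a else min a (xs!0))
           else if k = length xs then max (xs!(k-1)) a
           else max (xs!(k-1)) (min a (xs!k)))"
  using assms
proof (induction xs arbitrary: k)
  case Nil
  then show ?case by simp
next
  case (Cons x xs)
  show ?case
  proof (cases "a \<le> x")
    case True
    have all: "\<forall>y\<in>set (x#xs). a \<le> y" using Cons.prems(1) True by auto
    show ?thesis
    proof (cases k)
      case 0
      then show ?thesis using True by simp
    next
      case (Suc k')
      have "k' < length (x#xs)" using Cons.prems Suc by simp
      then have "a \<le> (x#xs)!k'" using all nth_mem by blast
      moreover have "min a ((x#xs)!k) \<le> a" by simp
      ultimately show ?thesis using True Suc by (auto simp: max_def)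
    qed
  next
    case False
    show ?thesis
    proof (cases k)
      case 0
      then show ?thesis using False by simp
    next
      case (Suc k')
      have sxs: "sorted xs" using Cons.prems by simp
      have k': "k' \<le> length xs" using Cons.prems Suc by simp
      have IH: "insort a xs ! k' = (if k' = 0 then (if xs = [] then a else min a (xs!0))
           else if k' = length xs then max (xs!(k'-1)) a
           else max (xs!(k'-1)) (min a (xs!k')))" using Cons.IH[OF sxs k'] .
      show ?thesis
      proof (cases "k' = 0")
        case True
        show ?thesis
        proof (cases xs)
          case Nil
          then show ?thesis using False Suc True by (simp add: max_def)
        next
          case (Cons y ys)
          have "x \<le> y" using Cons.prems(1) \<open>xs = y#ys\<close> by simp
          then show ?thesis using False Suc True IH \<open>xs = y#ys\<close> by (simp add: max_def min_def)
        qed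
      next
        case nz: False
        then show ?thesis using False Suc IH by (cases k') (auto simp: nth_Cons')
      qed
    qed
  qed
qed



lemma meas_sort:
  fixes fs :: "('a \<Rightarrow> real) list"
  assumes "\<forall>f\<in>set fs. f \<in> borel_measurable M"
  shows "k < length fs \<Longrightarrow> (\<lambda>x. sort (map (\<lambda>f. f x) fs) ! k) \<in> borel_measurable M"
  using assms
proof (induction fs arbitrary: k)
  case Nil
  then show ?case by simp
next
  case (Cons f fs)
  define S where "S x = sort (map (\<lambda>f. f x) fs)" for x
  have fm: "f \<in> borel_measurable M" using Cons.prems by simp
  have Sm: "\<And>j. j < length fs \<Longrightarrow> (\<lambda>x. S x ! j) \<in> borel_measurable M"
    unfolding S_def using Cons.IH Cons.prems by simp
  have len: "\<And>x. length (S x) = length fs" unfolding S_def by simp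
  have Snil: "\<And>x. S x = [] \<longleftrightarrow> fs = []" using len by (metis length_0_conv)
  have eq: "\<And>x. sort (map (\<lambda>f. f x) (f#fs)) ! k = (if k = 0 then (if fs = [] then f x else min (f x) (S x!0))
           else if k = length fs then max (S x!(k-1)) (f x)
           else max (S x!(k-1)) (min (f x) (S x!k)))"
  proof -
    fix x
    have "sort (map (\<lambda>f. f x) (f#fs)) = insort (f x) (S x)" unfolding S_def by simp
    moreover have "k \<le> length (S x)" using Cons.prems len by simp
    ultimately show "sort (map (\<lambda>f. f x) (f#fs)) ! k = (if k = 0 then (if fs = [] then f x else min (f x) (S x!0))
           else if k = length fs then max (S x!(k-1)) (f x)
           else max (S x!(k-1)) (min (f x) (S x!k)))"
      using insort_nth[of "S x" k "f x"] len Snil unfolding S_def by simp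
  qed
  show ?case
  proof (cases "k = 0")
    case True
    show ?thesis
    proof (cases "fs = []")
      case True
      then show ?thesis using \<open>k=0\<close> eq fm by simp
    next
      case False
      then have "(\<lambda>x. S x ! 0) \<in> borel_measurable M" using Sm by simp
      then show ?thesis using \<open>k=0\<close> False eq fm by simp
    qed
  next
    case k0: False
    show ?thesis
    proof (cases "k = length fs")
      case True
      have "(\<lambda>x. S x ! (k-1)) \<in> borel_measurable M" using Sm k0 True by simp
      then show ?thesis using k0 True eq fm by simp
    next
      case False
      have "(\<lambda>x. S x ! (k-1)) \<in> borel_measurable M" "(\<lambda>x. S x ! k) \<in> borel_measurable M"
        using Sm k0 False Cons.prems by simp_all
      then show ?thesis using k0 False eq fm by simp
    qed
  qed
qed

lemma seg_nth: "i < length ps + 1 \<Longrightarrow> seg_lengths ps ! i = sort (0 # ps @ [1]) ! (i+1) - sort (0 # ps @ [1]) ! i"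
  unfolding seg_lengths_def Let_def by (simp del: upt_Suc)

lemma len_seg: "length (seg_lengths ps) = length ps + 1"
  unfolding seg_lengths_def Let_def by simp

lemma meas_seg:
  fixes fs :: "('a \<Rightarrow> real) list"
  assumes "\<forall>f\<in>set fs. f \<in> borel_measurable M" "i < length fs + 1"
  shows "(\<lambda>x. seg_lengths (map (\<lambda>f. f x) fs) ! i) \<in> borel_measurable M"
proof -
  let ?gs = "(\<lambda>_. 0) # fs @ [\<lambda>_. 1]"
  have e: "\<And>x. 0 # map (\<lambda>f. f x) fs @ [1] = map (\<lambda>f. f x) ?gs" by simp
  have m: "\<forall>f\<in>set ?gs. f \<in> borel_measurable M" using assms(1) by auto
  have "(\<lambda>x. sort (map (\<lambda>f. f x) ?gs) ! (i+1)) \<in> borel_measurable M"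
       "(\<lambda>x. sort (map (\<lambda>f. f x) ?gs) ! i) \<in> borel_measurable M"
    using meas_sort[OF m] assms(2) by simp_all
  then show ?thesis using assms(2) by (simp add: seg_nth e del: list.map)
qed

lemma pred_st:
  fixes fs :: "('a \<Rightarrow> real) list"
  assumes "\<forall>f\<in>set fs. f \<in> borel_measurable M"
  shows "Measurable.pred M (\<lambda>x. some_triangle (seg_lengths (map (\<lambda>f. f x) fs)))"
proof -
  let ?n = "length fs + 1"
  let ?g = "\<lambda>i x. seg_lengths (map (\<lambda>f. f x) fs) ! i"
  have gm: "\<And>i. i < ?n \<Longrightarrow> ?g i \<in> borel_measurable M" using meas_seg[OF assms] by blast
  have eq: "\<And>x. some_triangle (seg_lengths (map (\<lambda>f. f x) fs)) \<longleftrightarrow>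
     (\<exists>k\<in>{..<?n}. \<exists>j\<in>{..<k}. \<exists>i\<in>{..<j}. ?g i x < ?g j x + ?g k x \<and> ?g j x < ?g i x + ?g k x \<and> ?g k x < ?g i x + ?g j x)"
    unfolding st_sorted len_seg forms_triangle_def by (simp add: Bex_def lessThan_iff)
  have "Measurable.pred M (\<lambda>x. \<exists>k\<in>{..<?n}. \<exists>j\<in>{..<k}. \<exists>i\<in>{..<j}. ?g i x < ?g j x + ?g k x \<and> ?g j x < ?g i x + ?g k x \<and> ?g k x < ?g i x + ?g j x)"
  proof (intro pred_intros_countable_bounded)
    fix k j i assume "k \<in> {..<?n}" "j \<in> {..<k}" "i \<in> {..<j}"
    then have [measurable]: "?g i \<in> borel_measurable M" "?g j \<in> borel_measurable M" "?g k \<in> borel_measurable M"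
      using gm by auto
    show "Measurable.pred M (\<lambda>x. ?g i x < ?g j x + ?g k x \<and> ?g j x < ?g i x + ?g k x \<and> ?g k x < ?g i x + ?g j x)"
      by measurable
  qed
  then show ?thesis using eq by simp
qed



definition Mv :: "real \<Rightarrow> real \<Rightarrow> real \<Rightarrow> real" where
  "Mv L p q = (if min p q \<ge> L then 0 else if max p q \<ge> L then min p q else max p q)"

definition Fn :: "real \<Rightarrow> real \<Rightarrow> real \<Rightarrow> real" where
  "Fn L p q = max 0 (2*\<bar>p - q\<bar> - L - Mv L p q)"

definition Tc :: "real \<Rightarrow> real \<Rightarrow> bool" where
  "Tc a b \<longleftrightarrow> a < 1/2 \<and> b < 1/2 \<and> 1 - a - b < 1/2"

lemma core:
  assumes "p < 1/2" "q < 1/2" "L < 1/2" "p + q + L = 1" "0 < u" "u < L"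
  shows "\<not> tri4 p q u (L - u) \<longleftrightarrow> Mv L p q \<le> \<bar>2*u - L\<bar> \<and> \<bar>2*u - L\<bar> \<le> 2*\<bar>p - q\<bar> - L"
  using assms unfolding tri4_def forms_triangle_def Mv_def
  by (auto simp: abs_if min_def max_def split: if_splits)

lemma tri4_perm1: "tri4 w x y z = tri4 y z w x"
  unfolding tri4_def using ft_sym1 ft_sym2 by metis
lemma tri4_perm2: "tri4 w x y z = tri4 w z x y"
  unfolding tri4_def using ft_sym1 ft_sym2 by metis

lemma inside:
  fixes p q L lo hi t :: real
  assumes "p < 1/2" "q < 1/2" "L < 1/2" "p + q + L = 1" "hi = lo + L"
    "\<bar>2*t - (lo+hi)\<bar> \<le> 2*\<bar>p - q\<bar> - L"
  shows "lo < t \<and> t < hi"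
  using assms by (auto simp: abs_if split: if_splits)

lemma Mv_nonneg: "0 < p \<Longrightarrow> 0 < q \<Longrightarrow> 0 \<le> Mv L p q"
  unfolding Mv_def by auto

lemma emeasure_annulus:
  assumes "0 \<le> m"
  shows "emeasure lborel {t::real. m \<le> \<bar>2*t - C\<bar> \<and> \<bar>2*t - C\<bar> \<le> D} = ennreal (max 0 (D - m))"
proof (cases "D < m")
  case True
  then have e: "{t::real. m \<le> \<bar>2*t - C\<bar> \<and> \<bar>2*t - C\<bar> \<le> D} = {}" by auto
  show ?thesis unfolding e using True by simp
next
  case False
  show ?thesis
  proof (cases "m = 0")
    case True
    have "{t::real. m \<le> \<bar>2*t - C\<bar> \<and> \<bar>2*t - C\<bar> \<le> D} = {(C-D)/2..(C+D)/2}"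
      using True by (auto simp: abs_if)
    then show ?thesis using True False by (simp add: field_simps)
  next
    case m0: False
    have eq: "{t::real. m \<le> \<bar>2*t - C\<bar> \<and> \<bar>2*t - C\<bar> \<le> D} = {(C-D)/2..(C-m)/2} \<union> {(C+m)/2..(C+D)/2}"
      using assms by (auto simp: abs_if)
    have disj: "{(C-D)/2..(C-m)/2} \<inter> {(C+m)/2..(C+D)/2} = {}" using assms m0 by (auto simp: max_def split: if_splits)
    have "emeasure lborel ({(C-D)/2..(C-m)/2} \<union> {(C+m)/2..(C+D)/2}) =
          emeasure lborel {(C-D)/2..(C-m)/2} + emeasure lborel {(C+m)/2..(C+D)/2}"
      using disj by (intro plus_emeasure[symmetric]) auto
    also have "\<dots> = ennreal ((C-m)/2 - (C-D)/2) + ennreal ((C+D)/2 - (C+m)/2)" using False assms by simp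
    also have "\<dots> = ennreal (max 0 (D - m))"
    proof -
      have "ennreal ((C-m)/2 - (C-D)/2) + ennreal ((C+D)/2 - (C+m)/2) = ennreal ((C-m)/2 - (C-D)/2 + ((C+D)/2 - (C+m)/2))"
        using False assms by (intro ennreal_plus[symmetric]) auto
      also have "(C-m)/2 - (C-D)/2 + ((C+D)/2 - (C+m)/2) = max 0 (D - m)" using False by (simp add: field_simps)
      finally show ?thesis .
    qed
    finally show ?thesis using eq by simp
  qed
qed



definition Phi :: "real \<Rightarrow> real \<Rightarrow> real \<Rightarrow> bool" where
  "Phi y0 y1 y2 \<longleftrightarrow> some_triangle (seg_lengths [y0,y1]) \<and> \<not> some_triangle (seg_lengths [y0,y1,y2])"

definition Ann :: "real \<Rightarrow> real \<Rightarrow> real \<Rightarrow> real \<Rightarrow> real set" where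
  "Ann lo hi p q = {t. Mv (hi-lo) p q \<le> \<bar>2*t - (lo+hi)\<bar> \<and> \<bar>2*t - (lo+hi)\<bar> \<le> 2*\<bar>p - q\<bar> - (hi - lo)}"

lemma seg_lengths_4: "seg_lengths [u,v] = (let s = sort (0 # [u,v] @ [1]) in [s!1 - s!0, s!2 - s!1, s!3 - s!2])"
  unfolding seg_lengths_def Let_def by (simp add: eval_nat_numeral upt_Suc)

lemma seg_lengths_5: "seg_lengths [u,v,w] = (let s = sort (0 # [u,v,w] @ [1]) in [s!1 - s!0, s!2 - s!1, s!3 - s!2, s!4 - s!3])"
  unfolding seg_lengths_def Let_def by (simp add: eval_nat_numeral upt_Suc)

lemma seg2:
  assumes "0 \<le> y0" "y0 \<le> y1" "y1 \<le> (1::real)"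
  shows "seg_lengths [y0,y1] = [y0, y1-y0, 1-y1]"
proof -
  have "sort (0 # [y0,y1] @ [1]) = [0,y0,y1,1]"
    using assms by (intro properties_for_sort) auto
  then show ?thesis unfolding seg_lengths_4 by simp
qed

lemma seg3_left:
  assumes "0 \<le> y2" "y2 \<le> y0" "y0 \<le> y1" "y1 \<le> (1::real)"
  shows "seg_lengths [y0,y1,y2] = [y2, y0-y2, y1-y0, 1-y1]"
proof -
  have "sort (0 # [y0,y1,y2] @ [1]) = [0,y2,y0,y1,1]"
    using assms by (intro properties_for_sort) (auto simp: add_mset_commute)
  then show ?thesis unfolding seg_lengths_5 by simp
qed

lemma seg3_mid:
  assumes "0 \<le> y0" "y0 \<le> y2" "y2 \<le> y1" "y1 \<le> (1::real)"
  shows "seg_lengths [y0,y1,y2] = [y0, y2-y0, y1-y2, 1-y1]"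
proof -
  have "sort (0 # [y0,y1,y2] @ [1]) = [0,y0,y2,y1,1]"
    using assms by (intro properties_for_sort) (auto simp: add_mset_commute)
  then show ?thesis unfolding seg_lengths_5 by simp
qed

lemma seg3_right:
  assumes "0 \<le> y0" "y0 \<le> y1" "y1 \<le> y2" "y2 \<le> (1::real)"
  shows "seg_lengths [y0,y1,y2] = [y0, y1-y0, y2-y1, 1-y2]"
proof -
  have "sort (0 # [y0,y1,y2] @ [1]) = [0,y0,y1,y2,1]"
    using assms by (intro properties_for_sort) (auto simp: add_mset_commute)
  then show ?thesis unfolding seg_lengths_5 by simp
qed

lemma ann_inside:
  assumes "p < 1/2" "q < 1/2" "hi - lo < 1/2" "p + q + (hi - lo) = 1" "t \<in> Ann lo hi p q"
  shows "lo < t \<and> t < hi"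
  using inside[of p q "hi - lo" hi lo t] assms unfolding Ann_def by auto

lemma ptw:
  assumes "0 \<le> y0" "y0 < y1" "y1 \<le> 1" "Tc y0 (y1-y0)" "y2 \<notin> {0,y0,y1,1}"
  shows "(Phi y0 y1 y2 \<and> y2 \<in> {0..1}) \<longleftrightarrow>
     (y2 \<in> Ann 0 y0 (y1-y0) (1-y1) \<or> y2 \<in> Ann y0 y1 y0 (1-y1) \<or> y2 \<in> Ann y1 1 y0 (y1-y0))"
proof -
  have T: "y0 < 1/2" "y1 - y0 < 1/2" "1 - y1 < 1/2" using assms(4) unfolding Tc_def by auto
  have first: "some_triangle (seg_lengths [y0,y1])"
    using seg2[of y0 y1] assms T by (simp add: some_triangle3 forms_triangle_def)
  have in1: "y2 \<in> Ann 0 y0 (y1-y0) (1-y1) \<Longrightarrow> 0 < y2 \<and> y2 < y0"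
    using ann_inside[of "y1-y0" "1-y1" y0 0 y2] T by auto
  have in2: "y2 \<in> Ann y0 y1 y0 (1-y1) \<Longrightarrow> y0 < y2 \<and> y2 < y1"
    using ann_inside[of y0 "1-y1" y1 y0 y2] T by auto
  have in3: "y2 \<in> Ann y1 1 y0 (y1-y0) \<Longrightarrow> y1 < y2 \<and> y2 < 1"
    using ann_inside[of y0 "y1-y0" 1 y1 y2] T by auto
  consider "y2 < 0" | "0 < y2 \<and> y2 < y0" | "y0 < y2 \<and> y2 < y1" | "y1 < y2 \<and> y2 < 1" | "1 < y2"
    using assms(5) by fastforce
  then show ?thesis
  proof cases
    case 1
    then show ?thesis using in1 in2 in3 assms by auto
  next
    case 5
    then show ?thesis using in1 in2 in3 assms by auto
  next
    case 2
    have "Phi y0 y1 y2 \<longleftrightarrow> \<not> tri4 (y1-y0) (1-y1) y2 (y0 - y2)"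
      unfolding Phi_def using first seg3_left[of y2 y0 y1] 2 assms
      by (simp add: some_triangle4 tri4_perm1[of y2])
    also have "\<dots> \<longleftrightarrow> y2 \<in> Ann 0 y0 (y1-y0) (1-y1)"
      using core[of "y1-y0" "1-y1" y0 y2] T 2 unfolding Ann_def by simp
    finally show ?thesis using 2 in2 in3 assms by auto
  next
    case 3
    have "Phi y0 y1 y2 \<longleftrightarrow> \<not> tri4 y0 (1-y1) (y2 - y0) ((y1-y0) - (y2 - y0))"
      unfolding Phi_def using first seg3_mid[of y0 y2 y1] 3 assms
      by (simp add: some_triangle4 tri4_perm2[of y0])
    also have "\<dots> \<longleftrightarrow> y2 \<in> Ann y0 y1 y0 (1-y1)"
      using core[of y0 "1-y1" "y1-y0" "y2 - y0"] T 3 unfolding Ann_def by (simp add: algebra_simps)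
    finally show ?thesis using 3 in1 in3 assms by auto
  next
    case 4
    have "Phi y0 y1 y2 \<longleftrightarrow> \<not> tri4 y0 (y1-y0) (y2 - y1) ((1-y1) - (y2 - y1))"
      unfolding Phi_def using first seg3_right[of y0 y1 y2] 4 assms
      by (simp add: some_triangle4)
    also have "\<dots> \<longleftrightarrow> y2 \<in> Ann y1 1 y0 (y1-y0)"
      using core[of y0 "y1-y0" "1-y1" "y2 - y1"] T 4 unfolding Ann_def by (simp add: algebra_simps)
    finally show ?thesis using 4 in1 in2 assms by auto
  qed
qed



definition gg :: "real \<Rightarrow> real \<Rightarrow> real \<Rightarrow> ennreal" where
  "gg y0 y1 y2 = (if Phi y0 y1 y2 then 1 else 0)"

definition GG :: "real \<Rightarrow> real \<Rightarrow> ennreal" where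
  "GG y0 y1 = (\<integral>\<^sup>+y2. gg y0 y1 y2 * indicator {0..1} y2 \<partial>lborel)"

definition H :: "real \<Rightarrow> real \<Rightarrow> real" where
  "H a b = (if Tc a b then Fn a b (1-a-b) + Fn b a (1-a-b) + Fn (1-a-b) a b else 0)"

lemma Fn_nonneg: "0 \<le> Fn L p q" unfolding Fn_def by simp

lemma Ann_sets[measurable]: "Ann lo hi p q \<in> sets lborel"
proof -
  have "Ann lo hi p q = {t \<in> space lborel. Mv (hi-lo) p q \<le> \<bar>2*t - (lo+hi)\<bar> \<and> \<bar>2*t - (lo+hi)\<bar> \<le> 2*\<bar>p - q\<bar> - (hi - lo)}"
    unfolding Ann_def by simp
  also have "\<dots> \<in> sets lborel" by measurable
  finally show ?thesis .
qed

lemma emeasure_Ann: "0 < p \<Longrightarrow> 0 < q \<Longrightarrow> emeasure lborel (Ann lo hi p q) = ennreal (Fn (hi-lo) p q)"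
  unfolding Ann_def Fn_def using emeasure_annulus[OF Mv_nonneg, of p q "hi-lo" "lo+hi" "2*\<bar>p - q\<bar> - (hi - lo)"]
  by (simp add: algebra_simps)

lemma GG_closed:
  assumes "0 \<le> y0" "y0 < y1" "y1 \<le> 1"
  shows "GG y0 y1 = ennreal (H y0 (y1 - y0))"
proof (cases "Tc y0 (y1 - y0)")
  case False
  have "\<not> some_triangle (seg_lengths [y0,y1])"
    using seg2[of y0 y1] assms False by (simp add: some_triangle3 forms_triangle_def Tc_def) linarith
  then have "\<And>y2. gg y0 y1 y2 = 0" unfolding gg_def Phi_def by simp
  then show ?thesis unfolding GG_def H_def using False by simp
next
  case True
  have T: "y0 < 1/2" "y1 - y0 < 1/2" "1 - y1 < 1/2" using True unfolding Tc_def by auto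
  let ?A1 = "Ann 0 y0 (y1-y0) (1-y1)" and ?A2 = "Ann y0 y1 y0 (1-y1)" and ?A3 = "Ann y1 1 y0 (y1-y0)"
  have in1: "\<And>t. t \<in> ?A1 \<Longrightarrow> 0 < t \<and> t < y0"
    using ann_inside[of "y1-y0" "1-y1" y0 0] T by auto
  have in2: "\<And>t. t \<in> ?A2 \<Longrightarrow> y0 < t \<and> t < y1"
    using ann_inside[of y0 "1-y1" y1 y0] T by auto
  have in3: "\<And>t. t \<in> ?A3 \<Longrightarrow> y1 < t \<and> t < 1"
    using ann_inside[of y0 "y1-y0" 1 y1] T by auto
  have AE: "AE y2 in lborel. y2 \<noteq> 0 \<and> y2 \<noteq> y0 \<and> y2 \<noteq> y1 \<and> y2 \<noteq> 1"
    by (intro AE_conjI AE_lborel_singleton)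
  have "GG y0 y1 = (\<integral>\<^sup>+y2. indicator ?A1 y2 + indicator ?A2 y2 + indicator ?A3 y2 \<partial>lborel)"
    unfolding GG_def
  proof (rule nn_integral_cong_AE)
    show "AE y2 in lborel. gg y0 y1 y2 * indicator {0..1} y2 = indicator ?A1 y2 + indicator ?A2 y2 + indicator ?A3 y2"
      using AE
    proof eventually_elim
      case (elim y2)
      then have y2: "y2 \<notin> {0,y0,y1,1}" by auto
      have e: "(Phi y0 y1 y2 \<and> y2 \<in> {0..1}) \<longleftrightarrow> (y2 \<in> ?A1 \<or> y2 \<in> ?A2 \<or> y2 \<in> ?A3)"
        using ptw[OF assms True y2] .
      show ?case
        using e in1[of y2] in2[of y2] in3[of y2] assms unfolding gg_def
        by (auto simp: indicator_def)
    qed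
  qed
  also have "\<dots> = emeasure lborel ?A1 + emeasure lborel ?A2 + emeasure lborel ?A3"
    by (simp add: nn_integral_add nn_integral_indicator[OF Ann_sets])
  also have "\<dots> = ennreal (Fn y0 (y1-y0) (1-y1)) + ennreal (Fn (y1-y0) y0 (1-y1)) + ennreal (Fn (1-y1) y0 (y1-y0))"
    using T by (simp add: emeasure_Ann)
  also have "\<dots> = ennreal (H y0 (y1 - y0))"
    unfolding H_def using True by (simp add: Fn_nonneg ennreal_plus[symmetric] del: ennreal_plus)
  finally show ?thesis .
qed



definition g1 :: "real \<Rightarrow> real \<Rightarrow> real" where
  "g1 a b = (if a < 1/2 \<and> (1-a)/2 \<le> b \<and> b \<le> 3*a-1 then 3*a-1-b else 0)"
definition g2 :: "real \<Rightarrow> real \<Rightarrow> real" where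
  "g2 a b = (if a < 1/2 \<and> 1-2*a \<le> b \<and> b \<le> (3*a-1)/2 then 3*a-1-2*b else 0)"

lemma K3_split:
  assumes "b \<notin> {(1-a)/2, 3*a-1, 1-2*a, (3*a-1)/2, a}"
  shows "(if b < a then (if Tc a b then Fn (1-a-b) a b else 0) else 0) = g1 a b + g2 a b"
  using assms unfolding Tc_def Fn_def Mv_def g1_def g2_def
  by (auto simp: abs_if min_def max_def split: if_splits)



lemma g1_nonneg: "0 \<le> g1 a b" unfolding g1_def by auto
lemma g2_nonneg: "0 \<le> g2 a b" unfolding g2_def by auto

lemma int_g1: "(\<integral>\<^sup>+b. ennreal (g1 a b) \<partial>lborel) = ennreal (if 3/7 \<le> a \<and> a < 1/2 then (7*a-3)^2/8 else 0)"
proof (cases "3/7 \<le> a \<and> a < 1/2")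
  case True
  have "(\<integral>\<^sup>+b. ennreal (g1 a b) \<partial>lborel) = (\<integral>\<^sup>+b\<in>{(1-a)/2..3*a-1}. ennreal (3*a-1-b) \<partial>lborel)"
    using True by (intro nn_integral_cong) (auto simp: g1_def indicator_def)
  also have "\<dots> = ennreal (((3*a-1)*(3*a-1) - (3*a-1)^2/2) - ((3*a-1)*((1-a)/2) - ((1-a)/2)^2/2))"
    using True
    by (intro nn_integral_FTC_Icc[where F="\<lambda>b. (3*a-1)*b - b^2/2"])
       (auto intro!: derivative_eq_intros simp: field_simps)
  also have "\<dots> = ennreal ((7*a-3)^2/8)" by (rule arg_cong[where f=ennreal]) (simp add: field_simps power2_eq_square)
  finally show ?thesis using True by simp
next
  case False
  then have "\<And>b. g1 a b = 0" unfolding g1_def by auto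
  then show ?thesis using False by auto
qed

lemma int_g2: "(\<integral>\<^sup>+b. ennreal (g2 a b) \<partial>lborel) = ennreal (if 3/7 \<le> a \<and> a < 1/2 then (7*a-3)^2/4 else 0)"
proof (cases "3/7 \<le> a \<and> a < 1/2")
  case True
  have "(\<integral>\<^sup>+b. ennreal (g2 a b) \<partial>lborel) = (\<integral>\<^sup>+b\<in>{1-2*a..(3*a-1)/2}. ennreal (3*a-1-2*b) \<partial>lborel)"
    using True by (intro nn_integral_cong) (auto simp: g2_def indicator_def)
  also have "\<dots> = ennreal (((3*a-1)*((3*a-1)/2) - ((3*a-1)/2)^2) - ((3*a-1)*(1-2*a) - (1-2*a)^2))"
    using True
    by (intro nn_integral_FTC_Icc[where F="\<lambda>b. (3*a-1)*b - b^2"])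
       (auto intro!: derivative_eq_intros simp: field_simps)
  also have "\<dots> = ennreal ((7*a-3)^2/4)" by (rule arg_cong[where f=ennreal]) (simp add: field_simps power2_eq_square)
  finally show ?thesis using True by simp
next
  case False
  then have "\<And>b. g2 a b = 0" unfolding g2_def by auto
  then show ?thesis using False by auto
qed

definition Q :: "real \<Rightarrow> real" where
  "Q a = (if 3/7 \<le> a \<and> a < 1/2 then 3*(7*a-3)^2/8 else 0)"

lemma inner_K3:
  "(\<integral>\<^sup>+b. ennreal (if b < a then (if Tc a b then Fn (1-a-b) a b else 0) else 0) \<partial>lborel) = ennreal (Q a)"
proof -
  have AE: "AE b in lborel. b \<noteq> (1-a)/2 \<and> b \<noteq> 3*a-1 \<and> b \<noteq> 1-2*a \<and> b \<noteq> (3*a-1)/2 \<and> b \<noteq> a"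
    by (intro AE_conjI AE_lborel_singleton)
  have "(\<integral>\<^sup>+b. ennreal (if b < a then (if Tc a b then Fn (1-a-b) a b else 0) else 0) \<partial>lborel)
      = (\<integral>\<^sup>+b. ennreal (g1 a b) + ennreal (g2 a b) \<partial>lborel)"
  proof (rule nn_integral_cong_AE)
    show "AE b in lborel. ennreal (if b < a then (if Tc a b then Fn (1-a-b) a b else 0) else 0) = ennreal (g1 a b) + ennreal (g2 a b)"
      using AE
    proof eventually_elim
      case (elim b)
      then show ?case using K3_split[of b a] g1_nonneg[of a b] g2_nonneg[of a b]
        by (simp add: ennreal_plus[symmetric] del: ennreal_plus)
    qed
  qed
  also have "\<dots> = (\<integral>\<^sup>+b. ennreal (g1 a b) \<partial>lborel) + (\<integral>\<^sup>+b. ennreal (g2 a b) \<partial>lborel)"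
    by (rule nn_integral_add) (auto simp: g1_def g2_def)
  also have "\<dots> = ennreal (Q a)"
  proof (cases "3/7 \<le> a \<and> a < 1/2")
    case True
    have "ennreal ((7*a-3)^2/8) + ennreal ((7*a-3)^2/4) = ennreal ((7*a-3)^2/8 + (7*a-3)^2/4)"
      by (rule ennreal_plus[symmetric]) auto
    also have "(7*a-3)^2/8 + (7*a-3)^2/4 = 3*(7*a-3)^2/8" by simp
    finally show ?thesis unfolding int_g1 int_g2 Q_def using True by simp
  next
    case False
    then show ?thesis unfolding int_g1 int_g2 Q_def by auto
  qed
  finally show ?thesis .
qed

lemma outer_Q: "(\<integral>\<^sup>+a. ennreal (Q a) \<partial>lborel) = ennreal (1/448)"
proof -
  have "(\<integral>\<^sup>+a. ennreal (Q a) \<partial>lborel) = (\<integral>\<^sup>+a\<in>{3/7..1/2}. ennreal (3*(7*a-3)^2/8) \<partial>lborel)"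
  proof (rule nn_integral_cong_AE)
    show "AE a in lborel. ennreal (Q a) = ennreal (3*(7*a-3)^2/8) * indicator {3/7..1/2} a"
      using AE_lborel_singleton[of "1/2::real"]
      by eventually_elim (auto simp: Q_def indicator_def)
  qed
  also have "\<dots> = ennreal ((7*(1/2)-3)^3/56 - (7*(3/7)-3)^3/56)"
  proof (rule nn_integral_FTC_Icc[where F="\<lambda>a. (7*a-3)^3/56"])
    show "(\<lambda>a::real. 3*(7*a-3)^2/8) \<in> borel_measurable borel" by measurable
    show "\<And>x. x \<in> {3/7..1/2} \<Longrightarrow> ((\<lambda>a. (7*a-3)^3/56) has_real_derivative 3*(7*x-3)^2/8) (at x)"
      by (auto intro!: derivative_eq_intros simp: field_simps eval_nat_numeral)
    show "\<And>x. x \<in> {3/7..1/2} \<Longrightarrow> 0 \<le> 3*(7*x-3)^2/(8::real)" by simp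
    show "3/7 \<le> (1/2::real)" by simp
  qed
  also have "\<dots> = ennreal (1/448)" by (simp add: eval_nat_numeral)
  finally show ?thesis .
qed



lemma swap_lborel:
  fixes f :: "real \<Rightarrow> real \<Rightarrow> ennreal"
  assumes "(\<lambda>(x,y). f x y) \<in> borel_measurable (lborel \<Otimes>\<^sub>M lborel)"
  shows "(\<integral>\<^sup>+x. \<integral>\<^sup>+y. f x y \<partial>lborel \<partial>lborel) = (\<integral>\<^sup>+x. \<integral>\<^sup>+y. f y x \<partial>lborel \<partial>lborel)"
  using lborel_pair.Fubini'[OF assms] by simp

lemma double:
  fixes f :: "real \<Rightarrow> real \<Rightarrow> ennreal"
  assumes m[measurable]: "(\<lambda>(x,y). f x y) \<in> borel_measurable (lborel \<Otimes>\<^sub>M lborel)"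
    and sym: "\<And>x y. f x y = f y x"
  shows "(\<integral>\<^sup>+x. \<integral>\<^sup>+y. (if x < y then f x y else 0) \<partial>lborel \<partial>lborel) = (\<integral>\<^sup>+x. \<integral>\<^sup>+y. (if y < x then f x y else 0) \<partial>lborel \<partial>lborel)"
    and "(\<integral>\<^sup>+x. \<integral>\<^sup>+y. f x y \<partial>lborel \<partial>lborel) = 2 * (\<integral>\<^sup>+x. \<integral>\<^sup>+y. (if y < x then f x y else 0) \<partial>lborel \<partial>lborel)"
proof -
  have m1[measurable]: "(\<lambda>(x,y). if y < x then f x y else 0) \<in> borel_measurable (lborel \<Otimes>\<^sub>M lborel)"
    by measurable
  have m2[measurable]: "(\<lambda>(x,y). if x < y then f x y else 0) \<in> borel_measurable (lborel \<Otimes>\<^sub>M lborel)"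
    by measurable
  show sw: "(\<integral>\<^sup>+x. \<integral>\<^sup>+y. (if x < y then f x y else 0) \<partial>lborel \<partial>lborel) = (\<integral>\<^sup>+x. \<integral>\<^sup>+y. (if y < x then f x y else 0) \<partial>lborel \<partial>lborel)"
  proof -
    have "(\<integral>\<^sup>+x. \<integral>\<^sup>+y. (if x < y then f x y else 0) \<partial>lborel \<partial>lborel) = (\<integral>\<^sup>+x. \<integral>\<^sup>+y. (if y < x then f y x else 0) \<partial>lborel \<partial>lborel)"
      using swap_lborel[OF m2] by simp
    also have "\<dots> = (\<integral>\<^sup>+x. \<integral>\<^sup>+y. (if y < x then f x y else 0) \<partial>lborel \<partial>lborel)"
      by (intro nn_integral_cong) (metis sym)
    finally show ?thesis .
  qed
  have inner: "(\<integral>\<^sup>+y. f x y \<partial>lborel) = (\<integral>\<^sup>+y. (if y < x then f x y else 0) \<partial>lborel) + (\<integral>\<^sup>+y. (if x < y then f x y else 0) \<partial>lborel)" for x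
  proof -
    have "(\<integral>\<^sup>+y. f x y \<partial>lborel) = (\<integral>\<^sup>+y. (if y < x then f x y else 0) + (if x < y then f x y else 0) \<partial>lborel)"
      by (rule nn_integral_cong_AE) (use AE_lborel_singleton[of x] in \<open>eventually_elim, auto\<close>)
    also have "\<dots> = (\<integral>\<^sup>+y. (if y < x then f x y else 0) \<partial>lborel) + (\<integral>\<^sup>+y. (if x < y then f x y else 0) \<partial>lborel)"
      by (rule nn_integral_add) measurable
    finally show ?thesis .
  qed
  have "(\<integral>\<^sup>+x. \<integral>\<^sup>+y. f x y \<partial>lborel \<partial>lborel) = (\<integral>\<^sup>+x. (\<integral>\<^sup>+y. (if y < x then f x y else 0) \<partial>lborel) + (\<integral>\<^sup>+y. (if x < y then f x y else 0) \<partial>lborel) \<partial>lborel)"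
    by (simp add: inner)
  also have "\<dots> = (\<integral>\<^sup>+x. \<integral>\<^sup>+y. (if y < x then f x y else 0) \<partial>lborel \<partial>lborel) + (\<integral>\<^sup>+x. \<integral>\<^sup>+y. (if x < y then f x y else 0) \<partial>lborel \<partial>lborel)"
    by (rule nn_integral_add) measurable
  also have "\<dots> = 2 * (\<integral>\<^sup>+x. \<integral>\<^sup>+y. (if y < x then f x y else 0) \<partial>lborel \<partial>lborel)"
    unfolding sw by (simp add: mult_2)
  finally show "(\<integral>\<^sup>+x. \<integral>\<^sup>+y. f x y \<partial>lborel \<partial>lborel) = 2 * (\<integral>\<^sup>+x. \<integral>\<^sup>+y. (if y < x then f x y else 0) \<partial>lborel \<partial>lborel)" .
qed



definition K1 :: "real \<Rightarrow> real \<Rightarrow> ennreal" where "K1 a b = ennreal (if Tc a b then Fn a b (1-a-b) else 0)"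
definition K2 :: "real \<Rightarrow> real \<Rightarrow> ennreal" where "K2 a b = ennreal (if Tc a b then Fn b a (1-a-b) else 0)"
definition K3 :: "real \<Rightarrow> real \<Rightarrow> ennreal" where "K3 a b = ennreal (if Tc a b then Fn (1-a-b) a b else 0)"

lemma Fn_meas[measurable]:
  assumes [measurable]: "L \<in> borel_measurable M" "p \<in> borel_measurable M" "q \<in> borel_measurable M"
  shows "(\<lambda>x. Fn (L x) (p x) (q x)) \<in> borel_measurable M"
  unfolding Fn_def Mv_def by measurable

lemma Tc_meas[measurable]:
  assumes [measurable]: "a \<in> borel_measurable M" "b \<in> borel_measurable M"
  shows "Measurable.pred M (\<lambda>x. Tc (a x) (b x))"
  unfolding Tc_def by measurable

lemma K1_m[measurable]: "(\<lambda>(x,y). K1 x y) \<in> borel_measurable (lborel \<Otimes>\<^sub>M lborel)" unfolding K1_def by measurable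
lemma K2_m[measurable]: "(\<lambda>(x,y). K2 x y) \<in> borel_measurable (lborel \<Otimes>\<^sub>M lborel)" unfolding K2_def by measurable
lemma K3_m[measurable]: "(\<lambda>(x,y). K3 x y) \<in> borel_measurable (lborel \<Otimes>\<^sub>M lborel)" unfolding K3_def by measurable
lemma K1_m1[measurable]: "K1 x \<in> borel_measurable lborel" unfolding K1_def by measurable
lemma K2_m1[measurable]: "K2 x \<in> borel_measurable lborel" unfolding K2_def by measurable
lemma K3_m1[measurable]: "K3 x \<in> borel_measurable lborel" unfolding K3_def by measurable
lemma K2_m2[measurable]: "K2 x \<in> borel_measurable borel" unfolding K2_def by measurable

lemma H_split: "ennreal (H a b) = K1 a b + K2 a b + K3 a b"
  unfolding H_def K1_def K2_def K3_def
  by (simp add: Fn_nonneg ennreal_plus[symmetric] del: ennreal_plus)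

lemma Tc_sym: "Tc a b = Tc b a" unfolding Tc_def by auto
lemma Fn_sym: "Fn L p q = Fn L q p" unfolding Fn_def Mv_def by (simp add: abs_minus_commute min.commute max.commute)

lemma J12: "(\<integral>\<^sup>+a. \<integral>\<^sup>+b. K1 a b \<partial>lborel \<partial>lborel) = (\<integral>\<^sup>+a. \<integral>\<^sup>+b. K2 a b \<partial>lborel \<partial>lborel)"
proof -
  have "(\<integral>\<^sup>+a. \<integral>\<^sup>+b. K1 a b \<partial>lborel \<partial>lborel) = (\<integral>\<^sup>+a. \<integral>\<^sup>+b. K1 b a \<partial>lborel \<partial>lborel)"
    by (rule swap_lborel) measurable
  also have "\<dots> = (\<integral>\<^sup>+a. \<integral>\<^sup>+b. K2 a b \<partial>lborel \<partial>lborel)"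
  proof -
    have "\<And>a b. K1 b a = K2 a b" unfolding K1_def K2_def Tc_def by (simp add: algebra_simps)
    then show ?thesis by simp
  qed
  finally show ?thesis .
qed

lemma J23: "(\<integral>\<^sup>+b. K2 a b \<partial>lborel) = (\<integral>\<^sup>+b. K3 a b \<partial>lborel)"
proof -
  have "(\<integral>\<^sup>+b. K2 a b \<partial>lborel) = ennreal \<bar>-1\<bar> * (\<integral>\<^sup>+b. K2 a ((1-a) + (-1) * b) \<partial>lborel)"
    by (rule nn_integral_real_affine) auto
  also have "\<dots> = (\<integral>\<^sup>+b. K3 a b \<partial>lborel)"
  proof -
    have e1: "\<And>b. 1 - a + (-1)*b = 1 - a - b" by simp
    have e2: "\<And>b. 1 - a - (1 - a - b) = b" by simp
    have "\<And>b. K2 a (1 - a + (-1)*b) = K3 a b" unfolding K2_def K3_def Tc_def e1 e2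
      by (rule arg_cong[where f=ennreal]) auto
    then show ?thesis by simp
  qed
  finally show ?thesis .
qed

lemma J3: "(\<integral>\<^sup>+a. \<integral>\<^sup>+b. K3 a b \<partial>lborel \<partial>lborel) = ennreal (1/224)"
proof -
  have "(\<integral>\<^sup>+a. \<integral>\<^sup>+b. K3 a b \<partial>lborel \<partial>lborel) = 2 * (\<integral>\<^sup>+a. \<integral>\<^sup>+b. (if b < a then K3 a b else 0) \<partial>lborel \<partial>lborel)"
    by (rule double(2)) (measurable, simp add: K3_def Tc_sym Fn_sym algebra_simps)
  also have "\<dots> = 2 * (\<integral>\<^sup>+a. ennreal (Q a) \<partial>lborel)"
  proof -
    have "\<And>a b. (if b < a then K3 a b else 0) = ennreal (if b < a then (if Tc a b then Fn (1-a-b) a b else 0) else 0)"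
      by (simp add: K3_def)
    then show ?thesis by (simp only: inner_K3)
  qed
  also have "\<dots> = ennreal 2 * ennreal (1/448)" unfolding outer_Q by simp
  also have "\<dots> = ennreal (2 * (1/448))" by (rule ennreal_mult[symmetric]) auto
  also have "\<dots> = ennreal (1/224)" by simp
  finally show ?thesis .
qed

lemma J_total: "(\<integral>\<^sup>+a. \<integral>\<^sup>+b. ennreal (H a b) \<partial>lborel \<partial>lborel) = ennreal (3/224)"
proof -
  have "(\<integral>\<^sup>+a. \<integral>\<^sup>+b. ennreal (H a b) \<partial>lborel \<partial>lborel) =
        (\<integral>\<^sup>+a. (\<integral>\<^sup>+b. K1 a b \<partial>lborel) + (\<integral>\<^sup>+b. K2 a b \<partial>lborel) + (\<integral>\<^sup>+b. K3 a b \<partial>lborel) \<partial>lborel)"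
    unfolding H_split by (simp add: nn_integral_add)
  also have "\<dots> = (\<integral>\<^sup>+a. \<integral>\<^sup>+b. K1 a b \<partial>lborel \<partial>lborel) + (\<integral>\<^sup>+a. \<integral>\<^sup>+b. K2 a b \<partial>lborel \<partial>lborel) + (\<integral>\<^sup>+a. \<integral>\<^sup>+b. K3 a b \<partial>lborel \<partial>lborel)"
    by (simp add: nn_integral_add)
  also have "\<dots> = ennreal (1/224 + 1/224 + 1/224)"
    unfolding J12 J23 J3 by (simp flip: ennreal_plus)
  also have "\<dots> = ennreal (3/224)" by simp
  finally show ?thesis .
qed



lemma Phi_pred[measurable]:
  assumes [measurable]: "f0 \<in> borel_measurable M" "f1 \<in> borel_measurable M" "f2 \<in> borel_measurable M"
  shows "Measurable.pred M (\<lambda>x. Phi (f0 x) (f1 x) (f2 x))"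
proof -
  have a: "Measurable.pred M (\<lambda>x. some_triangle (seg_lengths (map (\<lambda>f. f x) [f0, f1])))"
    by (rule pred_st) auto
  have b: "Measurable.pred M (\<lambda>x. some_triangle (seg_lengths (map (\<lambda>f. f x) [f0, f1, f2])))"
    by (rule pred_st) auto
  show ?thesis unfolding Phi_def using a b by simp
qed

lemma gg_meas[measurable]:
  assumes [measurable]: "f0 \<in> borel_measurable M" "f1 \<in> borel_measurable M" "f2 \<in> borel_measurable M"
  shows "(\<lambda>x. gg (f0 x) (f1 x) (f2 x)) \<in> borel_measurable M"
  unfolding gg_def by measurable

lemma H_meas[measurable]:
  assumes [measurable]: "f0 \<in> borel_measurable M" "f1 \<in> borel_measurable M"
  shows "(\<lambda>x. H (f0 x) (f1 x)) \<in> borel_measurable M"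
  unfolding H_def by measurable

lemma seg_swap: "seg_lengths (y1 # y0 # ys) = seg_lengths (y0 # y1 # ys)"
proof -
  have "mset (0 # (y1 # y0 # ys) @ [1]) = mset (0 # (y0 # y1 # ys) @ [1::real])" by (simp add: add_mset_commute)
  then have "sort (0 # (y1 # y0 # ys) @ [1]) = sort (0 # (y0 # y1 # ys) @ [1])"
    using properties_for_sort[of "sort (0 # (y0#y1#ys) @ [1])" "0 # (y1#y0#ys) @ [1]"] by (metis mset_sort sorted_sort)
  then show ?thesis unfolding seg_lengths_def by simp
qed

lemma gg_sym: "gg y0 y1 y2 = gg y1 y0 y2"
  unfolding gg_def Phi_def using seg_swap[of y1 y0 "[]"] seg_swap[of y1 y0 "[y2]"] by simp

lemma GG_meas[measurable]: "(\<lambda>(x,y). GG x y) \<in> borel_measurable (lborel \<Otimes>\<^sub>M lborel)"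
  unfolding GG_def by measurable

lemma Tc_pos: "Tc a b \<Longrightarrow> 0 < a \<and> 0 < b \<and> a + b < 1" unfolding Tc_def by auto

definition W :: "real \<Rightarrow> real \<Rightarrow> ennreal" where
  "W y0 y1 = GG y0 y1 * indicator {0..1} y0 * indicator {0..1} y1"

lemma W_meas[measurable]: "(\<lambda>(x,y). W x y) \<in> borel_measurable (lborel \<Otimes>\<^sub>M lborel)"
  unfolding W_def by measurable

lemma W_total: "(\<integral>\<^sup>+y0. \<integral>\<^sup>+y1. W y0 y1 \<partial>lborel \<partial>lborel) = ennreal (3/112)"
proof -
  have sym: "\<And>x y. W x y = W y x" unfolding W_def GG_def using gg_sym by (simp add: mult_ac)
  have "(\<integral>\<^sup>+y0. \<integral>\<^sup>+y1. W y0 y1 \<partial>lborel \<partial>lborel) = 2 * (\<integral>\<^sup>+y0. \<integral>\<^sup>+y1. (if y0 < y1 then W y0 y1 else 0) \<partial>lborel \<partial>lborel)"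
    using double[OF W_meas sym] by simp
  also have "(\<integral>\<^sup>+y0. \<integral>\<^sup>+y1. (if y0 < y1 then W y0 y1 else 0) \<partial>lborel \<partial>lborel) = (\<integral>\<^sup>+y0. \<integral>\<^sup>+y1. ennreal (H y0 (y1 - y0)) \<partial>lborel \<partial>lborel)"
  proof (intro nn_integral_cong)
    fix y0 y1 :: real
    show "(if y0 < y1 then W y0 y1 else 0) = ennreal (H y0 (y1 - y0))"
    proof (cases "y0 < y1 \<and> 0 \<le> y0 \<and> y1 \<le> 1")
      case True
      then show ?thesis unfolding W_def using GG_closed[of y0 y1] by (simp add: indicator_def)
    next
      case False
      then have "\<not> Tc y0 (y1 - y0)" using Tc_pos[of y0 "y1 - y0"] by auto
      then have "H y0 (y1 - y0) = 0" unfolding H_def by simp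
      then show ?thesis using False unfolding W_def by (auto simp: indicator_def)
    qed
  qed
  also have "(\<integral>\<^sup>+y0. \<integral>\<^sup>+y1. ennreal (H y0 (y1 - y0)) \<partial>lborel \<partial>lborel) = (\<integral>\<^sup>+a. \<integral>\<^sup>+b. ennreal (H a b) \<partial>lborel \<partial>lborel)"
  proof (rule nn_integral_cong)
    fix a :: real
    have "(\<integral>\<^sup>+y1. ennreal (H a (y1 - a)) \<partial>lborel) = ennreal \<bar>1\<bar> * (\<integral>\<^sup>+b. ennreal (H a ((a + 1 * b) - a)) \<partial>lborel)"
      by (rule nn_integral_real_affine) auto
    then show "(\<integral>\<^sup>+y1. ennreal (H a (y1 - a)) \<partial>lborel) = (\<integral>\<^sup>+b. ennreal (H a b) \<partial>lborel)" by simp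
  qed
  also note J_total
  also have "2 * ennreal (3/224) = ennreal 2 * ennreal (3/224)" by simp
  also have "\<dots> = ennreal (2 * (3/224))" by (rule ennreal_mult[symmetric]) auto
  also have "\<dots> = ennreal (3/112)" by simp
  finally show ?thesis .
qed



abbreviation U :: "real measure" where "U \<equiv> uniform_measure lborel {0..1}"

lemma U_prob: "prob_space U"
  by (rule prob_space_uniform_measure) auto

lemma U_sets[simp]: "sets U = sets borel" by simp

lemma U_int:
  assumes "f \<in> borel_measurable borel"
  shows "(\<integral>\<^sup>+x. f x \<partial>U) = (\<integral>\<^sup>+x. f x * indicator {0..1} x \<partial>lborel)"
  using assms by (subst nn_integral_uniform_measure) (auto simp: divide_ennreal_def)

lemma psf: "product_sigma_finite (\<lambda>_::nat. U)"
  unfolding product_sigma_finite_def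
  using prob_space_imp_sigma_finite[OF U_prob] by simp

lemma pairU: "pair_sigma_finite U U"
  unfolding pair_sigma_finite_def
  using prob_space_imp_sigma_finite[OF U_prob] by simp

lemma comp_meas: "i \<in> I \<Longrightarrow> (\<lambda>x. x i) \<in> borel_measurable (PiM I (\<lambda>_. U))"
  using measurable_component_singleton[of i I "\<lambda>_. U"]
  by (simp add: measurable_cong_sets[OF refl U_sets])

lemma meas_U_borel: "f \<in> borel_measurable U \<longleftrightarrow> f \<in> borel_measurable borel"
  by (simp add: measurable_cong_sets[OF U_sets refl])

lemma pairU_sets: "sets (U \<Otimes>\<^sub>M U) = sets (lborel \<Otimes>\<^sub>M lborel)"
  by (intro sets_pair_measure_cong) auto

theorem mainTheorem9:
  shows "measure break_space
           {x \<in> space break_space.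
              some_triangle (seg_lengths [x 0, x 1]) \<and>
              \<not> some_triangle (seg_lengths [x 0, x 1, x 2])} = 3 / 112"
proof -
  interpret ps: product_sigma_finite "\<lambda>_::nat. U" by (rule psf)
  interpret pr: pair_sigma_finite U U by (rule pairU)
  let ?B = "PiM (insert 0 {1,2::nat}) (\<lambda>_. U)"
  have "{..<3::nat} = insert 0 {1,2}" by auto
  then have B: "break_space = ?B" unfolding break_space_def by simp
  have c[measurable]: "(\<lambda>x. x 0) \<in> borel_measurable ?B" "(\<lambda>x. x 1) \<in> borel_measurable ?B" "(\<lambda>x. x 2) \<in> borel_measurable ?B"
    by (auto intro: comp_meas)
  let ?S = "{x \<in> space ?B. Phi (x 0) (x 1) (x 2)}"
  have S: "?S \<in> sets ?B" by measurable
  have "emeasure ?B ?S = (\<integral>\<^sup>+x. indicator ?S x \<partial>?B)" using S by simp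
  also have "\<dots> = (\<integral>\<^sup>+x. gg (x 0) (x 1) (x 2) \<partial>?B)"
    by (intro nn_integral_cong) (simp add: gg_def indicator_def)
  also have "\<dots> = (\<integral>\<^sup>+y0. \<integral>\<^sup>+x. gg y0 (x 1) (x 2) \<partial>PiM {1,2::nat} (\<lambda>_. U) \<partial>U)"
  proof -
    have mg: "(\<lambda>x. gg (x 0) (x 1) (x 2)) \<in> borel_measurable ?B" by measurable
    show ?thesis using ps.product_nn_integral_insert_rev[of "{1,2}" 0 "\<lambda>x. gg (x 0) (x 1) (x 2)"] mg by simp
  qed
  also have "\<dots> = (\<integral>\<^sup>+y0. \<integral>\<^sup>+a. \<integral>\<^sup>+b. gg y0 a b \<partial>U \<partial>U \<partial>U)"
  proof (rule nn_integral_cong)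
    fix y0 :: real
    have m: "(\<lambda>(a, b). gg y0 a b) \<in> borel_measurable (U \<Otimes>\<^sub>M U)"
      by (simp add: measurable_cong_sets[OF pairU_sets refl]) measurable
    have m2: "(\<lambda>z. gg y0 (fst z) (snd z)) \<in> borel_measurable (U \<Otimes>\<^sub>M U)"
      by (simp add: measurable_cong_sets[OF pairU_sets refl]) measurable
    have "(\<integral>\<^sup>+x. gg y0 (x 1) (x 2) \<partial>PiM {1,2::nat} (\<lambda>_. U)) = (\<integral>\<^sup>+z. gg y0 (fst z) (snd z) \<partial>(U \<Otimes>\<^sub>M U))"
      using ps.product_nn_integral_pair[of "gg y0" 1 2] m by simp
    also have "\<dots> = (\<integral>\<^sup>+a. \<integral>\<^sup>+b. gg y0 a b \<partial>U \<partial>U)"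
      using sigma_finite_measure.nn_integral_fst[OF prob_space_imp_sigma_finite[OF U_prob] m2] by simp
    finally show "(\<integral>\<^sup>+x. gg y0 (x 1) (x 2) \<partial>PiM {1,2::nat} (\<lambda>_. U)) = (\<integral>\<^sup>+a. \<integral>\<^sup>+b. gg y0 a b \<partial>U \<partial>U)" .
  qed
  also have "\<dots> = (\<integral>\<^sup>+y0. \<integral>\<^sup>+y1. W y0 y1 \<partial>lborel \<partial>lborel)"
  proof -
    have GGm: "(\<lambda>a. GG y0 a) \<in> borel_measurable borel" for y0
      unfolding GG_def by measurable
    have GGm2: "(\<lambda>y0. \<integral>\<^sup>+a. GG y0 a * indicator {0..1} a \<partial>lborel) \<in> borel_measurable borel"
      using GG_meas by measurable
    have "(\<integral>\<^sup>+y0. \<integral>\<^sup>+a. \<integral>\<^sup>+b. gg y0 a b \<partial>U \<partial>U \<partial>U) = (\<integral>\<^sup>+y0. \<integral>\<^sup>+a. GG y0 a \<partial>U \<partial>U)"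
      unfolding GG_def by (intro nn_integral_cong U_int) measurable
    also have "\<dots> = (\<integral>\<^sup>+y0. \<integral>\<^sup>+a. GG y0 a * indicator {0..1} a \<partial>lborel \<partial>U)"
      by (intro nn_integral_cong U_int GGm)
    also have "\<dots> = (\<integral>\<^sup>+y0. (\<integral>\<^sup>+a. GG y0 a * indicator {0..1} a \<partial>lborel) * indicator {0..1} y0 \<partial>lborel)"
      by (rule U_int[OF GGm2])
    also have "\<dots> = (\<integral>\<^sup>+y0. \<integral>\<^sup>+a. GG y0 a * indicator {0..1} a * indicator {0..1} y0 \<partial>lborel \<partial>lborel)"
    proof (rule nn_integral_cong)
      fix y0
      have [measurable]: "(\<lambda>a. GG y0 a) \<in> borel_measurable lborel" unfolding GG_def by measurable
      show "(\<integral>\<^sup>+a. GG y0 a * indicator {0..1} a \<partial>lborel) * indicator {0..1} y0 = (\<integral>\<^sup>+a. GG y0 a * indicator {0..1} a * indicator {0..1} y0 \<partial>lborel)"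
        by (rule nn_integral_multc[symmetric]) measurable
    qed
    also have "\<dots> = (\<integral>\<^sup>+y0. \<integral>\<^sup>+y1. W y0 y1 \<partial>lborel \<partial>lborel)"
      unfolding W_def by (simp add: mult_ac)
    finally show ?thesis .
  qed
  also have "\<dots> = ennreal (3/112)" by (rule W_total)
  finally have "emeasure break_space {x \<in> space break_space. Phi (x 0) (x 1) (x 2)} = ennreal (3/112)"
    unfolding B .
  then show ?thesis unfolding Phi_def measure_def by simp
qed

end
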